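(* Let $k$ be a field of characteristic $p>0$, $k'/k$ a finite purely inseparable field extension with normal generating sequence $\alpha_1,\ldots,\alpha_l$ and sequence of exponents $e_1,\dots,e_l$. Let $\mathfrak B:=k'\otimes_k k'$, $\mathfrak m$ the kernel of the multiplication map $\mathfrak B\to k'$, $a\otimes b\mapsto ab$, and $a_i:=1\otimes\alpha_i-\alpha_i\otimes 1\in\mathfrak m$. Regard $k'\subseteq\mathfrak B$ via $x\mapsto x\otimes 1$. Then: (i) $\mathfrak m$ is generated by $a_1,\dots,a_l$ over $k'$; namely $\mathfrak m=\mathfrak m\cap k'[a_1,\dots,a_l]$, i.e. every element of $\mathfrak m$ is a polynomial in $a_1,\dots,a_l$ with coefficients in $k'$; (ii) for each $1\le i\le l$, the $p^{e_i}$-power map takes $\mathfrak m$ into $k'[a_1^{p^{e_i}},\dots,a_{i-1}^{p^{e_i}}]\cap\mathfrak m$.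
   Context: For a tower $k'/k''/k$ and $x\in k'$, $e_{k''}(x)$ is the least $s$ with $x^{p^s}\in k''$; $x$ is normal in $k'/k''$ if $e_{k''}(x)\geq e_{k''}(y)$ for all $y\in k'$. A normal generating sequence of $k'/k$ is $\alpha_1,\dots,\alpha_l\in k'$ such that, with $k_i=k[\alpha_1,\dots,\alpha_i]$, each $\alpha_i$ is normal in $k'/k_{i-1}$, $\alpha_i\notin k_{i-1}$, and $k_l=k'$; its sequence of exponents is $e_i:=e_{k_{i-1}}(\alpha_i)$. *)

theory Defs
  imports Main "HOL-Computational_Algebra.Primes"
begin

definition is_subring :: "'K::field set \<Rightarrow> bool" where
  "is_subring R \<longleftrightarrow> 0 \<in> R \<and> 1 \<in> R \<and>
     (\<forall>x\<in>R. \<forall>y\<in>R. x + y \<in> R \<and> x - y \<in> R \<and> x * y \<in> R)"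

definition is_subfield :: "'K::field set \<Rightarrow> bool" where
  "is_subfield F \<longleftrightarrow> is_subring F \<and> (\<forall>x\<in>F. inverse x \<in> F)"

definition adj :: "'K::field set \<Rightarrow> (nat \<Rightarrow> 'K) \<Rightarrow> nat \<Rightarrow> 'K set" where
  "adj k \<alpha> i = \<Inter>{R. is_subring R \<and> k \<subseteq> R \<and> \<alpha> ` {1..i} \<subseteq> R}"

definition expo :: "nat \<Rightarrow> 'K::field set \<Rightarrow> 'K \<Rightarrow> nat" where
  "expo p F x = (LEAST s. x ^ (p ^ s) \<in> F)"

text \<open>x normal in k'/k'' (here k' is the whole field, i.e. UNIV).\<close>
definition is_normal_elt :: "nat \<Rightarrow> 'K::field set \<Rightarrow> 'K \<Rightarrow> bool" where
  "is_normal_elt p F x \<longleftrightarrow> (\<forall>y. expo p F x \<ge> expo p F y)"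

definition normal_gen_seq :: "nat \<Rightarrow> 'K::field set \<Rightarrow> (nat \<Rightarrow> 'K) \<Rightarrow> nat \<Rightarrow> bool" where
  "normal_gen_seq p k \<alpha> l \<longleftrightarrow>
     (\<forall>i\<in>{1..l}. is_normal_elt p (adj k \<alpha> (i - 1)) (\<alpha> i) \<and> \<alpha> i \<notin> adj k \<alpha> (i - 1))
     \<and> adj k \<alpha> l = UNIV"

definition fin_dim_over :: "'K::field set \<Rightarrow> bool" where
  "fin_dim_over k \<longleftrightarrow> (\<exists>B. finite B \<and> (\<forall>x. \<exists>c. c ` B \<subseteq> k \<and> x = (\<Sum>b\<in>B. c b * b)))"

text \<open>Elements of k' \<otimes>_k k' are represented by formal sums (lists of pairs (a,b) meaning
  sum of a \<otimes> b). Two formal sums denote the same tensor iff every k-bilinear map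
  agrees on them.\<close>

definition k_bilinear :: "'K::field set \<Rightarrow> ('K \<Rightarrow> 'K \<Rightarrow> 'K) \<Rightarrow> bool" where
  "k_bilinear k \<phi> \<longleftrightarrow>
     (\<forall>a a' b. \<phi> (a + a') b = \<phi> a b + \<phi> a' b) \<and>
     (\<forall>a b b'. \<phi> a (b + b') = \<phi> a b + \<phi> a b') \<and>
     (\<forall>c\<in>k. \<forall>a b. \<phi> (c * a) b = c * \<phi> a b \<and> \<phi> a (c * b) = c * \<phi> a b)"

definition tsum :: "('K::field \<Rightarrow> 'K \<Rightarrow> 'K) \<Rightarrow> ('K \<times> 'K) list \<Rightarrow> 'K" where
  "tsum \<phi> t = sum_list (map (\<lambda>(a, b). \<phi> a b) t)"

definition teq :: "'K::field set \<Rightarrow> ('K \<times> 'K) list \<Rightarrow> ('K \<times> 'K) list \<Rightarrow> bool" where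
  "teq k s t \<longleftrightarrow> (\<forall>\<phi>. k_bilinear k \<phi> \<longrightarrow> tsum \<phi> s = tsum \<phi> t)"

definition tmult :: "('K::field \<times> 'K) list \<Rightarrow> 'K" where
  "tmult t = tsum (*) t"

definition tadd :: "('K::field \<times> 'K) list \<Rightarrow> ('K \<times> 'K) list \<Rightarrow> ('K \<times> 'K) list" where
  "tadd s t = s @ t"

definition tmul :: "('K::field \<times> 'K) list \<Rightarrow> ('K \<times> 'K) list \<Rightarrow> ('K \<times> 'K) list" where
  "tmul s t = concat (map (\<lambda>(a, b). map (\<lambda>(c, d). (a * c, b * d)) t) s)"

primrec tpow :: "('K::field \<times> 'K) list \<Rightarrow> nat \<Rightarrow> ('K \<times> 'K) list" where
  "tpow t 0 = [(1, 1)]"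
| "tpow t (Suc n) = tmul t (tpow t n)"

definition tconst :: "'K::field \<Rightarrow> ('K \<times> 'K) list" where
  "tconst x = [(x, 1)]"

definition tgen :: "'K::field \<Rightarrow> ('K \<times> 'K) list" where
  "tgen a = [(1, a), (- a, 1)]"

text \<open>Representatives of the k'-subalgebra k'[S] of k' \<otimes>_k k' generated by S
  (k' embedded as x \<otimes> 1).\<close>
inductive_set talg :: "('K::field \<times> 'K) list set \<Rightarrow> ('K \<times> 'K) list set" for S where
  coeff: "tconst x \<in> talg S"
| gen: "s \<in> S \<Longrightarrow> s \<in> talg S"
| add: "s \<in> talg S \<Longrightarrow> t \<in> talg S \<Longrightarrow> tadd s t \<in> talg S"
| mul: "s \<in> talg S \<Longrightarrow> t \<in> talg S \<Longrightarrow> tmul s t \<in> talg S"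

end

theory Submission
  imports Defs "HOL-Computational_Algebra.Polynomial_Factorial"
begin


section \<open>Characteristic and Frobenius\<close>

lemma char_eq:
  assumes "prime p" "of_nat p = (0::'a::field)"
  shows "CHAR('a) = p"
proof -
  have "CHAR('a) dvd p" using assms(2) of_nat_eq_0_iff_char_dvd by blast
  moreover have "CHAR('a) \<noteq> 1" by simp
  ultimately show ?thesis using assms(1) by (metis prime_nat_iff)
qed

lemma frob_add:
  assumes "prime CHAR('a::comm_ring_1)"
  shows "(x + y :: 'a) ^ (CHAR('a) ^ n) = x ^ (CHAR('a) ^ n) + y ^ (CHAR('a) ^ n)"
  using freshmans_dream'[OF assms refl] by simp

lemma frob_diff:
  assumes "prime CHAR('a::comm_ring_1)"
  shows "(x - y :: 'a) ^ (CHAR('a) ^ n) = x ^ (CHAR('a) ^ n) - y ^ (CHAR('a) ^ n)"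
proof -
  have "x ^ (CHAR('a) ^ n) = ((x - y) + y) ^ (CHAR('a) ^ n)" by simp
  also have "\<dots> = (x - y) ^ (CHAR('a) ^ n) + y ^ (CHAR('a) ^ n)" by (rule frob_add[OF assms])
  finally show ?thesis by (simp add: algebra_simps)
qed

lemma frob_neg:
  assumes "prime CHAR('a::comm_ring_1)"
  shows "(- x :: 'a) ^ (CHAR('a) ^ n) = - (x ^ (CHAR('a) ^ n))"
  using frob_diff[OF assms, of 0 x n] assms prime_gt_0_nat by (simp add: power_0_left)

lemma frob_sum:
  assumes "prime CHAR('a::comm_ring_1)"
  shows "(sum f A :: 'a) ^ (CHAR('a) ^ n) = sum (\<lambda>i. f i ^ (CHAR('a) ^ n)) A"
  using freshmans_dream_sum'[OF assms refl] by simp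

section \<open>Subrings\<close>

lemma subring_0: "is_subring R \<Longrightarrow> 0 \<in> R" by (simp add: is_subring_def)
lemma subring_1: "is_subring R \<Longrightarrow> 1 \<in> R" by (simp add: is_subring_def)
lemma subring_add: "is_subring R \<Longrightarrow> x \<in> R \<Longrightarrow> y \<in> R \<Longrightarrow> x + y \<in> R" by (simp add: is_subring_def)
lemma subring_diff: "is_subring R \<Longrightarrow> x \<in> R \<Longrightarrow> y \<in> R \<Longrightarrow> x - y \<in> R" by (simp add: is_subring_def)
lemma subring_mult: "is_subring R \<Longrightarrow> x \<in> R \<Longrightarrow> y \<in> R \<Longrightarrow> x * y \<in> R" by (simp add: is_subring_def)
lemma subring_uminus: "is_subring R \<Longrightarrow> x \<in> R \<Longrightarrow> - x \<in> R"
  using subring_diff[of R 0 x] subring_0[of R] by simp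
lemma subring_power: "is_subring R \<Longrightarrow> x \<in> R \<Longrightarrow> x ^ n \<in> R"
  by (induction n) (auto intro: subring_1 subring_mult)
lemma subring_sum: "is_subring R \<Longrightarrow> (\<And>i. i \<in> A \<Longrightarrow> f i \<in> R) \<Longrightarrow> sum f A \<in> R"
  by (induction A rule: infinite_finite_induct) (auto intro: subring_0 subring_add)
lemma subring_of_nat: "is_subring R \<Longrightarrow> of_nat n \<in> R"
  by (induction n) (auto intro: subring_0 subring_1 subring_add)

lemma subfield_subring: "is_subfield F \<Longrightarrow> is_subring F" by (simp add: is_subfield_def)
lemma subfield_inverse: "is_subfield F \<Longrightarrow> x \<in> F \<Longrightarrow> inverse x \<in> F" by (simp add: is_subfield_def)
lemma subfield_divide: "is_subfield F \<Longrightarrow> x \<in> F \<Longrightarrow> y \<in> F \<Longrightarrow> x / y \<in> F"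
  by (simp add: divide_inverse is_subfield_def subring_mult)

lemma adj_subring: "is_subring (adj F \<alpha> i)"
  unfolding adj_def is_subring_def by auto
lemma adj_base: "F \<subseteq> adj F \<alpha> i"
  unfolding adj_def by auto
lemma adj_gen: "j \<in> {1..i} \<Longrightarrow> \<alpha> j \<in> adj F \<alpha> i"
  unfolding adj_def by auto
lemma adj_min: "is_subring R \<Longrightarrow> F \<subseteq> R \<Longrightarrow> (\<And>j. j \<in> {1..i} \<Longrightarrow> \<alpha> j \<in> R) \<Longrightarrow> adj F \<alpha> i \<subseteq> R"
  unfolding adj_def by auto
lemma adj_0: "is_subring F \<Longrightarrow> adj F \<alpha> 0 = F"
  using adj_min[of F F 0 \<alpha>] adj_base[of F \<alpha> 0] by auto
lemma adj_mono: "i \<le> i' \<Longrightarrow> adj F \<alpha> i \<subseteq> adj F \<alpha> i'"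
  by (rule adj_min[OF adj_subring]) (use adj_base[of F \<alpha> i'] adj_gen[of _ i' \<alpha> F] in auto)

lemma adj_shift:
  "adj (adj F \<alpha> 1) (\<lambda>j. \<alpha> (Suc j)) m = adj F \<alpha> (Suc m)"
proof
  show "adj (adj F \<alpha> 1) (\<lambda>j. \<alpha> (Suc j)) m \<subseteq> adj F \<alpha> (Suc m)"
    by (rule adj_min[OF adj_subring]) (use adj_mono[of 1 "Suc m" F \<alpha>] adj_gen[of _ "Suc m" \<alpha> F] in auto)
next
  have "F \<subseteq> adj (adj F \<alpha> 1) (\<lambda>j. \<alpha> (Suc j)) m"
    using adj_base[of F \<alpha> 1] adj_base[of "adj F \<alpha> 1" "\<lambda>j. \<alpha> (Suc j)" m] by auto
  moreover have "\<alpha> j \<in> adj (adj F \<alpha> 1) (\<lambda>j. \<alpha> (Suc j)) m" if jm: "j \<in> {1..Suc m}" for j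
  proof (cases "j = 1")
    case True
    then show ?thesis using adj_gen[of 1 1 \<alpha> F] adj_base[of "adj F \<alpha> 1" "\<lambda>j. \<alpha> (Suc j)" m] by auto
  next
    case False
    then obtain j' where "j = Suc j'" "j' \<in> {1..m}" using jm by (cases j) auto
    then show ?thesis using adj_gen[of j' m "\<lambda>j. \<alpha> (Suc j)"] by auto
  qed
  ultimately show "adj F \<alpha> (Suc m) \<subseteq> adj (adj F \<alpha> 1) (\<lambda>j. \<alpha> (Suc j)) m"
    by (intro adj_min adj_subring) auto
qed

lemma subring_radicial_subfield:
  assumes "is_subring R" "F \<subseteq> R" "is_subfield F" "\<forall>x::'K::field. \<exists>s. x ^ (p ^ s) \<in> F" "p > 0"
  shows "is_subfield R"
  unfolding is_subfield_def
proof (intro conjI ballI assms(1))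
  fix x assume x: "x \<in> R"
  show "inverse x \<in> R"
  proof (cases "x = 0")
    case True then show ?thesis using assms(1) by (simp add: subring_0)
  next
    case False
    obtain s where s: "x ^ (p ^ s) \<in> F" using assms(4) by blast
    have p0: "p ^ s > 0" using assms(5) by simp
    have ps: "Suc (p ^ s - 1) = p ^ s" using p0 by simp
    have xs: "x ^ (p ^ s) = x * x ^ (p ^ s - 1)" by (subst ps[symmetric], subst power_Suc, rule refl)
    have y0: "x ^ (p ^ s - 1) \<noteq> 0" using False by simp
    have "inverse x = x ^ (p ^ s - 1) * inverse (x ^ (p ^ s))"
      unfolding xs using y0 by (simp add: inverse_mult_distrib)
    moreover have "inverse (x ^ (p ^ s)) \<in> R" using subfield_inverse[OF assms(3) s] assms(2) by auto
    ultimately show ?thesis using x assms(1) by (metis subring_mult subring_power)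
  qed
qed

section \<open>Exponents\<close>

lemma expo_mem: "\<exists>s. x ^ (p ^ s) \<in> F \<Longrightarrow> x ^ (p ^ expo p F x) \<in> F"
  unfolding expo_def by (rule LeastI_ex)
lemma expo_le: "x ^ (p ^ s) \<in> F \<Longrightarrow> expo p F x \<le> s"
  unfolding expo_def by (rule Least_le)
lemma expo_min: "s < expo p F x \<Longrightarrow> x ^ (p ^ s) \<notin> F"
  unfolding expo_def by (rule not_less_Least)
lemma pow_mem_mono:
  assumes "is_subring F" "x ^ (p ^ s) \<in> F" "s \<le> t"
  shows "x ^ (p ^ t) \<in> F"
proof -
  have "x ^ (p ^ t) = (x ^ (p ^ s)) ^ (p ^ (t - s))"
    using assms(3) by (simp add: power_mult[symmetric] power_add[symmetric])
  then show ?thesis using assms subring_power by metis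
qed
lemma expo_antimono:
  assumes "F \<subseteq> F'" "\<exists>s. x ^ (p ^ s) \<in> F"
  shows "expo p F' x \<le> expo p F x"
  using expo_mem[OF assms(2)] assms(1) by (intro expo_le) auto



definition polyin :: "'K::field set \<Rightarrow> 'K poly \<Rightarrow> bool" where
  "polyin F P \<longleftrightarrow> (\<forall>n. coeff P n \<in> F)"

lemma polyin_add: "is_subring F \<Longrightarrow> polyin F P \<Longrightarrow> polyin F Q \<Longrightarrow> polyin F (P + Q)"
  by (simp add: polyin_def subring_add)
lemma polyin_diff: "is_subring F \<Longrightarrow> polyin F P \<Longrightarrow> polyin F Q \<Longrightarrow> polyin F (P - Q)"
  by (simp add: polyin_def subring_diff)
lemma polyin_mult: "is_subring F \<Longrightarrow> polyin F P \<Longrightarrow> polyin F Q \<Longrightarrow> polyin F (P * Q)"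
  unfolding polyin_def coeff_mult by (auto intro!: subring_sum subring_mult)
lemma polyin_smult: "is_subring F \<Longrightarrow> c \<in> F \<Longrightarrow> polyin F P \<Longrightarrow> polyin F (smult c P)"
  by (simp add: polyin_def subring_mult)
lemma polyin_monom: "is_subring F \<Longrightarrow> c \<in> F \<Longrightarrow> polyin F (monom c n)"
  by (simp add: polyin_def coeff_monom subring_0)
lemma polyin_const: "is_subring F \<Longrightarrow> c \<in> F \<Longrightarrow> polyin F [:c:]"
  by (simp add: polyin_def coeff_pCons subring_0 split: nat.splits)
lemma polyin_0: "is_subring F \<Longrightarrow> polyin F 0"
  by (simp add: polyin_def subring_0)
lemma polyin_1: "is_subring F \<Longrightarrow> polyin F 1"
  using polyin_const[of F 1] by (simp add: subring_1 one_pCons)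
lemma polyin_power: "is_subring F \<Longrightarrow> polyin F P \<Longrightarrow> polyin F (P ^ n)"
  by (induction n) (auto intro: polyin_1 polyin_mult)
lemma polyin_poly: "is_subring F \<Longrightarrow> polyin F P \<Longrightarrow> x \<in> F \<Longrightarrow> poly P x \<in> F"
  unfolding poly_altdef polyin_def by (auto intro!: subring_sum subring_mult subring_power)

lemma monic_dvd_linear_power:
  fixes b :: "'K::field"
  shows "P * S = [:- b, 1:] ^ N \<Longrightarrow> lead_coeff P = 1 \<Longrightarrow> P = [:- b, 1:] ^ degree P"
proof (induction N arbitrary: P S)
  case 0
  then have "degree (P * S) = 0" by simp
  moreover have "P \<noteq> 0" "S \<noteq> 0" using 0 by auto
  ultimately have "degree P = 0" by (simp add: degree_mult_eq)
  then show ?case using 0(2) by (metis degree_eq_zeroE lead_coeff_pCons(2) one_pCons pCons_0_0 power_0)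
next
  case (Suc N)
  have "poly (P * S) b = 0" using Suc.prems(1) by simp
  then have "poly P b = 0 \<or> poly S b = 0" by simp
  then show ?case
  proof
    assume "poly P b = 0"
    then obtain P1 where P1: "P = [:- b, 1:] * P1" using poly_eq_0_iff_dvd by (metis dvdE)
    have "[:- b, 1:] * (P1 * S) = [:- b, 1:] * [:- b, 1:] ^ N" by (metis P1 Suc.prems(1) mult.assoc power_Suc)
    then have "P1 * S = [:- b, 1:] ^ N" by (metis mult_cancel_left pCons_eq_0_iff one_neq_zero)
    moreover have "lead_coeff P1 = 1"
    proof -
      have l1: "lead_coeff [:- b, 1:] = 1" by simp
      show ?thesis using Suc.prems(2) by (simp only: P1 lead_coeff_mult l1 mult_1)
    qed
    ultimately have "P1 = [:- b, 1:] ^ degree P1" using Suc.IH by blast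
    moreover have "P1 \<noteq> 0" using \<open>lead_coeff P1 = 1\<close> by auto
    moreover have dd: "degree ([:- b, 1:] * P1) = Suc (degree P1)" using \<open>P1 \<noteq> 0\<close> by (subst degree_mult_eq) auto
    ultimately have "degree P = Suc (degree P1)" by (simp only: P1 dd)
    then show ?thesis using P1 \<open>P1 = [:- b, 1:] ^ degree P1\<close> by (metis power_Suc)
  next
    assume "poly S b = 0"
    then obtain S1 where S1: "S = [:- b, 1:] * S1" using poly_eq_0_iff_dvd by (metis dvdE)
    have "[:- b, 1:] * (P * S1) = [:- b, 1:] * [:- b, 1:] ^ N" by (metis S1 Suc.prems(1) mult.left_commute power_Suc)
    then have "P * S1 = [:- b, 1:] ^ N" by (metis mult_cancel_left pCons_eq_0_iff one_neq_zero)
    then show ?thesis using Suc.IH Suc.prems(2) by blast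
  qed
qed

lemma polyin_division:
  assumes F: "is_subring F" and P: "polyin F P" "lead_coeff P = 1"
  shows "polyin F Q \<Longrightarrow> \<exists>S R. polyin F S \<and> polyin F R \<and> Q = P * S + R \<and> (R = 0 \<or> degree R < degree P)"
proof (induction "degree Q" arbitrary: Q rule: less_induct)
  case less
  show ?case
  proof (cases "degree Q < degree P")
    case True
    then show ?thesis using less.prems polyin_0[OF F] by (intro exI[of _ 0] exI[of _ Q]) auto
  next
    case False
    show ?thesis
    proof (cases "degree P = 0")
      case True
      then have "P = 1" using P(2) by (metis lead_coeff_1 degree_eq_zeroE one_pCons lead_coeff_pCons(2) pCons_0_0)
      then show ?thesis using less.prems polyin_0[OF F] by (intro exI[of _ Q] exI[of _ 0]) auto
    next
      case dP: False
      define M where "M = monom (lead_coeff Q) (degree Q - degree P)"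
      define Q' where "Q' = Q - M * P"
      have inM: "polyin F M" unfolding M_def using less.prems by (intro polyin_monom F) (simp add: polyin_def)
      have inQ': "polyin F Q'" unfolding Q'_def by (intro polyin_diff polyin_mult F inM P less.prems)
      have "degree (M * P) \<le> degree Q"
        using False unfolding M_def by (intro order.trans[OF degree_mult_le]) (auto intro: order.trans[OF add_le_mono[OF degree_monom_le order.refl]])
      then have dQ': "degree Q' \<le> degree Q" unfolding Q'_def by (intro degree_diff_le) auto
      have cQ': "coeff Q' (degree Q) = 0"
        using False P(2) unfolding Q'_def M_def by (simp add: coeff_monom_mult)
      show ?thesis
      proof (cases "Q' = 0")
        case True
        then have "Q = P * M + 0" unfolding Q'_def by (simp add: mult.commute)
        then show ?thesis using inM polyin_0[OF F] by blast
      next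
        case Q'0: False
        have "degree Q' \<noteq> degree Q" using cQ' Q'0 by (metis leading_coeff_0_iff)
        with dQ' have "degree Q' < degree Q" by simp
        from less.hyps[OF this inQ'] obtain S R where SR: "polyin F S" "polyin F R" "Q' = P * S + R" "R = 0 \<or> degree R < degree P" by blast
        have "Q = P * (S + M) + R" using SR(3) unfolding Q'_def by (simp add: algebra_simps)
        then show ?thesis using SR polyin_add[OF F SR(1) inM] by blast
      qed
    qed
  qed
qed

lemma coeff_linear_power_pred:
  fixes a :: "'a::comm_ring_1"
  shows "coeff ([:a, 1:] ^ Suc n) n = of_nat (Suc n) * a"
proof (induction n)
  case 0 then show ?case by simp
next
  case (Suc n)
  have "[:a, 1:] ^ Suc (Suc n) = smult a ([:a, 1:] ^ Suc n) + pCons 0 ([:a, 1:] ^ Suc n)"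
    by (simp add: one_pCons)
  then have "coeff ([:a, 1:] ^ Suc (Suc n)) (Suc n) = a * coeff ([:a, 1:] ^ Suc n) (Suc n) + coeff ([:a, 1:] ^ Suc n) n"
    by simp
  also have "\<dots> = a + of_nat (Suc n) * a" using Suc coeff_linear_power[of a "Suc n"] by simp
  finally show ?case by (simp add: algebra_simps)
qed

lemma pcompose_power': "pcompose (Q ^ d) r = (pcompose Q r) ^ d"
  by (induction d) (auto simp: pcompose_mult pcompose_1)

lemma coeff_pcompose_monom_p:
  fixes Q :: "'a::comm_ring_1 poly"
  assumes "p > 0"
  shows "coeff (pcompose Q (monom 1 p)) (p * j) = coeff Q j"
proof (induction Q arbitrary: j)
  case 0 then show ?case by simp
next
  case (pCons a Q)
  show ?case
  proof (cases j)
    case 0 then show ?thesis using assms by (simp add: pcompose_pCons coeff_monom_mult)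
  next
    case (Suc j')
    have "p * j \<ge> p" "p * j - p = p * j'" using Suc by (auto simp: algebra_simps)
    then show ?thesis using Suc pCons.IH assms by (simp add: pcompose_pCons coeff_monom_mult coeff_pCons split: nat.splits)
  qed
qed

lemma linear_power_frob:
  assumes "prime CHAR('K::field)"
  shows "[:- (b::'K), 1:] ^ (CHAR('K) ^ n) = pcompose [:- (b ^ (CHAR('K) ^ n)), 1:] (monom 1 (CHAR('K) ^ n))"
proof -
  have "[:- b, 1:] = monom 1 1 - [:b:]" by (simp add: monom_altdef)
  then have "[:- b, 1:] ^ (CHAR('K) ^ n) = (monom 1 1) ^ (CHAR('K) ^ n) - [:b:] ^ (CHAR('K) ^ n)"
    using frob_diff[of "monom (1::'K) 1" "[:b:]" n] assms by simp
  also have "\<dots> = monom 1 (CHAR('K) ^ n) - [:b ^ (CHAR('K) ^ n):]"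
    by (simp add: monom_power poly_const_pow)
  also have "\<dots> = pcompose [:- (b ^ (CHAR('K) ^ n)), 1:] (monom 1 (CHAR('K) ^ n))"
    by (simp add: pcompose_pCons)
  finally show ?thesis .
qed



lemma make_monic:
  assumes F: "is_subfield F" and R: "polyin F R" "R \<noteq> 0" "poly R \<beta> = 0"
  shows "\<exists>P. polyin F P \<and> lead_coeff P = 1 \<and> degree P = degree R \<and> poly P \<beta> = 0"
proof (intro exI conjI)
  let ?c = "inverse (lead_coeff R)"
  have c0: "?c \<noteq> 0" using R(2) by simp
  have "?c \<in> F" using R(1) F by (simp add: polyin_def subfield_inverse)
  then show "polyin F (smult ?c R)" using F R(1) by (simp add: polyin_smult subfield_subring)
  show "lead_coeff (smult ?c R) = 1" using R(2) by simp
  show "degree (smult ?c R) = degree R" using c0 by simp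
  show "poly (smult ?c R) \<beta> = 0" using R(3) by simp
qed

lemma linear_power_in_F:
  assumes p: "prime CHAR('K::field)" and F: "is_subfield F"
  shows "1 \<le> d \<Longrightarrow> polyin F ([:- (\<beta>::'K), 1:] ^ d) \<Longrightarrow> \<exists>s. CHAR('K) ^ s \<le> d \<and> \<beta> ^ (CHAR('K) ^ s) \<in> F"
proof (induction d arbitrary: \<beta> rule: less_induct)
  case (less d)
  have FR: "is_subring F" using F by (rule subfield_subring)
  show ?case
  proof (cases "CHAR('K) dvd d")
    case False
    obtain n where d: "d = Suc n" using less.prems(1) by (cases d) auto
    have "coeff ([:- \<beta>, 1:] ^ d) n = of_nat d * (- \<beta>)" using d coeff_linear_power_pred by blast
    moreover have "coeff ([:- \<beta>, 1:] ^ d) n \<in> F" using less.prems(2) by (simp add: polyin_def)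
    ultimately have A: "of_nat d * (- \<beta>) \<in> F" by simp
    have nz: "of_nat d \<noteq> (0::'K)" using False of_nat_eq_0_iff_char_dvd by blast
    have "\<beta> = - ((of_nat d * (- \<beta>)) / of_nat d)" using nz by simp
    moreover have "- ((of_nat d * (- \<beta>)) / of_nat d) \<in> F"
      using A subring_of_nat[OF FR] by (intro subring_uminus[OF FR] subfield_divide[OF F]) auto
    ultimately have "\<beta> \<in> F" by simp
    then show ?thesis using less.prems(1) by (intro exI[of _ 0]) simp
  next
    case True
    then obtain d' where d: "d = CHAR('K) * d'" by blast
    have p1: "CHAR('K) > 1" using p prime_gt_1_nat by blast
    have d'1: "d' \<ge> 1" using less.prems(1) d by (cases d') auto
    have d'd: "d' < d" using d d'1 p1 by simp
    have "[:- \<beta>, 1:] ^ d = ([:- \<beta>, 1:] ^ (CHAR('K) ^ 1)) ^ d'" by (simp add: d power_mult)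
    also have "\<dots> = (pcompose [:- (\<beta> ^ (CHAR('K) ^ 1)), 1:] (monom 1 (CHAR('K) ^ 1))) ^ d'"
      using linear_power_frob[OF p, of \<beta> 1] by simp
    also have "\<dots> = pcompose ([:- (\<beta> ^ CHAR('K)), 1:] ^ d') (monom 1 (CHAR('K)))"
      by (simp add: pcompose_power')
    finally have eq: "[:- \<beta>, 1:] ^ d = pcompose ([:- (\<beta> ^ CHAR('K)), 1:] ^ d') (monom 1 (CHAR('K)))" .
    have "polyin F ([:- (\<beta> ^ CHAR('K)), 1:] ^ d')"
      unfolding polyin_def
    proof
      fix j
      have "coeff ([:- (\<beta> ^ CHAR('K)), 1:] ^ d') j = coeff ([:- \<beta>, 1:] ^ d) (CHAR('K) * j)"
        using coeff_pcompose_monom_p[of "CHAR('K)" "[:- (\<beta> ^ CHAR('K)), 1:] ^ d'" j] p1 eq by simp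
      then show "coeff ([:- (\<beta> ^ CHAR('K)), 1:] ^ d') j \<in> F" using less.prems(2) by (simp add: polyin_def)
    qed
    from less.IH[OF d'd d'1 this] obtain s where s: "CHAR('K) ^ s \<le> d'" "(\<beta> ^ CHAR('K)) ^ (CHAR('K) ^ s) \<in> F" by blast
    have "CHAR('K) ^ Suc s \<le> d" using s(1) d by simp
    moreover have "\<beta> ^ (CHAR('K) ^ Suc s) \<in> F" using s(2) by (simp add: power_mult)
    ultimately show ?thesis by blast
  qed
qed

lemma factA:
  fixes \<beta> :: "'K::field"
  assumes p: "prime CHAR('K)" and F: "is_subfield F"
    and b1: "\<beta> ^ (CHAR('K) ^ n) \<in> F" and b2: "\<beta> ^ (CHAR('K) ^ (n - 1)) \<notin> F"
    and R: "polyin F R" "degree R < CHAR('K) ^ n" "poly R \<beta> = 0"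
  shows "R = 0"
proof (rule ccontr)
  assume R0: "R \<noteq> 0"
  have FR: "is_subring F" using F by (rule subfield_subring)
  define Good where "Good d \<longleftrightarrow> (\<exists>P. polyin F P \<and> lead_coeff P = 1 \<and> degree P = d \<and> poly P \<beta> = 0)" for d
  have "Good (degree R)" unfolding Good_def using make_monic[OF F R(1) R0 R(3)] .
  define d where "d = (LEAST d. Good d)"
  have Gd: "Good d" unfolding d_def by (rule LeastI) fact
  have dR: "d \<le> degree R" unfolding d_def by (rule Least_le) fact
  from Gd obtain P where P: "polyin F P" "lead_coeff P = 1" "degree P = d" "poly P \<beta> = 0" unfolding Good_def by blast
  define Q where "Q = [:- \<beta>, 1:] ^ (CHAR('K) ^ n)"
  have "Q = pcompose [:- (\<beta> ^ (CHAR('K) ^ n)), 1:] (monom 1 (CHAR('K) ^ n))"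
    unfolding Q_def by (rule linear_power_frob[OF p])
  also have "\<dots> = [:- (\<beta> ^ (CHAR('K) ^ n)):] + monom 1 (CHAR('K) ^ n)"
    by (simp add: pcompose_pCons)
  finally have "polyin F Q" using b1 FR
    by (simp add: polyin_add polyin_const polyin_monom subring_uminus subring_1)
  from polyin_division[OF FR P(1) P(2) this] obtain S Rm where
    SR: "polyin F S" "polyin F Rm" "Q = P * S + Rm" "Rm = 0 \<or> degree Rm < degree P" by blast
  have "poly Q \<beta> = 0" unfolding Q_def using p prime_gt_0_nat by simp
  then have pRm: "poly Rm \<beta> = 0" using SR(3) P(4) by simp
  have "Rm = 0"
  proof (rule ccontr)
    assume "Rm \<noteq> 0"
    then have "degree Rm < d" using SR(4) P(3) by simp
    moreover have "Good (degree Rm)" unfolding Good_def using make_monic[OF F SR(2) \<open>Rm \<noteq> 0\<close> pRm] .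
    then have "d \<le> degree Rm" unfolding d_def by (rule Least_le)
    ultimately show False by simp
  qed
  then have "P * S = [:- \<beta>, 1:] ^ (CHAR('K) ^ n)" using SR(3) Q_def by simp
  from monic_dvd_linear_power[OF this P(2)] have Pe: "P = [:- \<beta>, 1:] ^ d" using P(3) by simp
  have d1: "1 \<le> d"
  proof (rule ccontr)
    assume "\<not> 1 \<le> d" then have "d = 0" by simp
    then have "P = 1" using Pe by simp
    then show False using P(4) by simp
  qed
  from linear_power_in_F[OF p F d1] P(1) Pe obtain s where s: "CHAR('K) ^ s \<le> d" "\<beta> ^ (CHAR('K) ^ s) \<in> F" by auto
  have "CHAR('K) ^ s < CHAR('K) ^ n" using s(1) dR R(2) by simp
  then have "s < n" using p prime_gt_1_nat power_less_imp_less_exp by blast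
  then have "\<beta> ^ (CHAR('K) ^ (n - 1)) \<in> F" using pow_mem_mono[OF FR s(2)] by simp
  then show False using b2 by simp
qed



lemma poly_frob:
  assumes p: "prime CHAR('a::comm_ring_1)"
  shows "(poly P x :: 'a) ^ (CHAR('a) ^ D) = poly (map_poly (\<lambda>c. c ^ (CHAR('a) ^ D)) P) (x ^ (CHAR('a) ^ D))"
proof (induction P)
  case 0
  have "CHAR('a) ^ D > 0" using p prime_gt_0_nat by simp
  then show ?case by (simp add: power_0_left)
next
  case (pCons a P)
  have "poly (pCons a P) x ^ (CHAR('a) ^ D) = (a + x * poly P x) ^ (CHAR('a) ^ D)" by simp
  also have "\<dots> = a ^ (CHAR('a) ^ D) + x ^ (CHAR('a) ^ D) * (poly P x) ^ (CHAR('a) ^ D)"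
    by (simp add: frob_add[OF p] power_mult_distrib)
  also have "\<dots> = poly (map_poly (\<lambda>c. c ^ (CHAR('a) ^ D)) (pCons a P)) (x ^ (CHAR('a) ^ D))"
  proof -
    have "CHAR('a) ^ D > 0" using p prime_gt_0_nat by simp
    then have f0: "(\<lambda>c::'a. c ^ (CHAR('a) ^ D)) 0 = 0" by (simp add: power_0_left)
    show ?thesis using pCons by (simp add: map_poly_pCons[of "\<lambda>c::'a. c ^ (CHAR('a) ^ D)", OF f0])
  qed
  finally show ?case .
qed

lemma frob_subring:
  assumes p: "prime CHAR('K::field)" and F: "is_subring F"
  shows "is_subring {x::'K. x ^ (CHAR('K) ^ D) \<in> F}"
  unfolding is_subring_def
  using p prime_gt_0_nat[of "CHAR('K)"] F
  by (auto simp: power_0_left simp: frob_add[OF p] frob_diff[OF p] power_mult_distrib subring_0 subring_1 subring_add subring_diff subring_mult)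

lemma lead_monom_plus_const:
  assumes "q > 0"
  shows "lead_coeff (monom 1 q + [:c:]) = (1::'a::comm_ring_1)" "degree (monom 1 q + [:c:]) = q"
proof -
  have d: "degree (monom (1::'a) q + [:c:]) = q"
    using assms by (subst degree_add_eq_left) (auto simp: degree_monom_eq)
  then show "degree (monom 1 q + [:c:]) = q" .
  show "lead_coeff (monom 1 q + [:c:]) = (1::'a)" using d assms by (simp add: coeff_pCons split: nat.splits)
qed

lemma key:
  fixes p :: nat and F :: "'K::field set"
  assumes p: "prime p" "CHAR('K) = p"
  shows "1 \<le> i \<Longrightarrow> is_subfield F \<Longrightarrow> (\<forall>x::'K. \<exists>s. x ^ (p ^ s) \<in> F)
    \<Longrightarrow> (\<forall>j\<in>{1..i}. is_normal_elt p (adj F \<alpha> (j - 1)) (\<alpha> j))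
    \<Longrightarrow> y ^ (p ^ expo p (adj F \<alpha> (i - 1)) (\<alpha> i))
          \<in> adj F (\<lambda>j. \<alpha> j ^ (p ^ expo p (adj F \<alpha> (i - 1)) (\<alpha> i))) (i - 1)"
proof (induction i arbitrary: F \<alpha> y)
  case 0 then show ?case by simp
next
  case (Suc i')
  have pC: "prime CHAR('K)" using p by simp
  have p0: "p > 0" using p(1) prime_gt_0_nat by blast
  have FR: "is_subring F" using Suc.prems(2) by (rule subfield_subring)
  define n where "n = expo p (adj F \<alpha> i') (\<alpha> (Suc i'))"
  define q where "q = p ^ n"
  have q0: "q > 0" unfolding q_def using p0 by simp
  have adj0: "adj F \<alpha> 0 = F" using FR by (rule adj_0)
  have rad: "x ^ (p ^ expo p F x) \<in> F" for x using Suc.prems(3) by (intro expo_mem) blast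
  have n1: "is_normal_elt p (adj F \<alpha> (1 - 1)) (\<alpha> 1)" using bspec[OF Suc.prems(4), of 1] by simp
  have norm1: "expo p F x \<le> expo p F (\<alpha> 1)" for x
    using n1 adj0 unfolding is_normal_elt_def by simp
  define e1 where "e1 = expo p F (\<alpha> 1)"
  have all_e1: "x ^ (p ^ e1) \<in> F" for x
    using pow_mem_mono[OF FR rad norm1] unfolding e1_def .
  show ?case
  proof (cases "i' = 0")
    case True
    have "y ^ (p ^ expo p F (\<alpha> 1)) \<in> F"
      using pow_mem_mono[OF FR rad norm1[of y]] by simp
    moreover have "n = expo p F (\<alpha> 1)" unfolding n_def using True adj0 by simp
    ultimately show ?thesis using True adj_0[OF FR] by simp
  next
    case False
    then have i'1: "1 \<le> i'" by simp
    define F1 where "F1 = adj F \<alpha> 1"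
    define \<beta> where "\<beta> = (\<lambda>j. \<alpha> (Suc j))"
    have F1f: "is_subfield F1" unfolding F1_def
      using subring_radicial_subfield[OF adj_subring adj_base Suc.prems(2) Suc.prems(3) p0] .
    have F1r: "\<forall>x::'K. \<exists>s. x ^ (p ^ s) \<in> F1" using Suc.prems(3) adj_base[of F \<alpha> 1] unfolding F1_def by blast
    have adjb: "adj F1 \<beta> m = adj F \<alpha> (Suc m)" for m unfolding F1_def \<beta>_def by (rule adj_shift)
    have F1n: "\<forall>j\<in>{1..i'}. is_normal_elt p (adj F1 \<beta> (j - 1)) (\<beta> j)"
    proof
      fix j assume j: "j \<in> {1..i'}"
      then have "Suc j \<in> {1..Suc i'}" by simp
      then have "is_normal_elt p (adj F \<alpha> (Suc j - 1)) (\<alpha> (Suc j))" using Suc.prems(4) by blast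
      moreover have "adj F1 \<beta> (j - 1) = adj F \<alpha> j" using adjb[of "j - 1"] j by simp
      ultimately show "is_normal_elt p (adj F1 \<beta> (j - 1)) (\<beta> j)" unfolding \<beta>_def by simp
    qed
    have nn: "expo p (adj F1 \<beta> (i' - 1)) (\<beta> i') = n"
      unfolding n_def using adjb[of "i' - 1"] i'1 by (simp add: \<beta>_def)
    define G where "G = adj F (\<lambda>j. \<alpha> j ^ q) i'"
    have GR: "is_subring G" unfolding G_def by (rule adj_subring)
    have FG: "F \<subseteq> G" unfolding G_def by (rule adj_base)
    have IH: "y ^ q \<in> adj F1 (\<lambda>j. \<beta> j ^ q) (i' - 1)"
      using Suc.IH[OF i'1 F1f F1r F1n, of y] unfolding nn q_def .
    define a1 where "a1 = \<alpha> 1"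
    define S where "S = {x. \<exists>P. polyin G P \<and> poly P a1 = x}"
    have constS: "c \<in> S" if "c \<in> G" for c
      unfolding S_def using that polyin_const[OF GR that] by (intro CollectI exI[of _ "[:c:]"]) simp
    have SR: "is_subring S"
      unfolding is_subring_def
    proof (intro conjI ballI)
      show "0 \<in> S" using constS subring_0[OF GR] by blast
      show "1 \<in> S" using constS subring_1[OF GR] by blast
      fix x y assume "x \<in> S" "y \<in> S"
      then obtain P Q where PQ: "polyin G P" "poly P a1 = x" "polyin G Q" "poly Q a1 = y" unfolding S_def by blast
      show "x + y \<in> S" unfolding S_def using PQ polyin_add[OF GR PQ(1) PQ(3)] by (intro CollectI exI[of _ "P + Q"]) simp
      show "x - y \<in> S" unfolding S_def using PQ polyin_diff[OF GR PQ(1) PQ(3)] by (intro CollectI exI[of _ "P - Q"]) simp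
      show "x * y \<in> S" unfolding S_def using PQ polyin_mult[OF GR PQ(1) PQ(3)] by (intro CollectI exI[of _ "P * Q"]) simp
    qed
    have a1S: "a1 \<in> S" unfolding S_def
      using polyin_monom[OF GR subring_1[OF GR], of 1] by (intro CollectI exI[of _ "monom 1 1"]) (simp add: poly_monom)
    have F1S: "F1 \<subseteq> S" unfolding F1_def
      using FG constS a1S unfolding a1_def by (intro adj_min SR) auto
    have genG: "\<alpha> j ^ q \<in> G" if "j \<in> {1..i'}" for j
      unfolding G_def using adj_gen[OF that, of "\<lambda>j. \<alpha> j ^ q" F] by simp
    have AS: "adj F1 (\<lambda>j. \<beta> j ^ q) (i' - 1) \<subseteq> S"
    proof (intro adj_min SR F1S)
      fix j assume "j \<in> {1..i' - 1}"
      then have "Suc j \<in> {1..i'}" by auto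
      then show "\<beta> j ^ q \<in> S" unfolding \<beta>_def using genG constS by blast
    qed
    from IH AS obtain P0 where P0: "polyin G P0" "poly P0 a1 = y ^ q" unfolding S_def by blast
    have a1q: "a1 ^ q \<in> G" unfolding a1_def using genG[of 1] i'1 by simp
    define Mq where "Mq = monom 1 q + [:- (a1 ^ q):]"
    have Mq: "polyin G Mq" "lead_coeff Mq = 1" "degree Mq = q" "poly Mq a1 = 0"
      unfolding Mq_def
      using a1q GR apply (auto intro!: polyin_add polyin_monom polyin_const subring_1 subring_uminus simp: poly_monom)[1]
        apply (rule lead_monom_plus_const[OF q0])
       apply (rule lead_monom_plus_const[OF q0])
      by (simp add: poly_monom)
    from polyin_division[OF GR Mq(1) Mq(2) P0(1)] obtain S0 P' where
      SP: "polyin G S0" "polyin G P'" "P0 = Mq * S0 + P'" "P' = 0 \<or> degree P' < degree Mq" by blast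
    have P'deg: "degree P' < q" using SP(4) Mq(3) q0 by auto
    have P'val: "poly P' a1 = y ^ q" using SP(3) P0(2) Mq(4) by simp
    have ne1: "n \<le> e1"
    proof -
      have "n \<le> expo p F (\<alpha> (Suc i'))"
        unfolding n_def using adj_base[of F \<alpha> i'] Suc.prems(3) by (intro expo_antimono) auto
      also have "\<dots> \<le> e1" unfolding e1_def by (rule norm1)
      finally show ?thesis .
    qed
    define D where "D = e1 - n"
    define N where "N = p ^ D"
    have qN: "q * N = p ^ e1" unfolding q_def N_def D_def using ne1 by (simp add: power_add[symmetric])
    have N0: "N > 0" unfolding N_def using p0 by simp
    have GN: "g ^ N \<in> F" if "g \<in> G" for g
    proof -
      have "G \<subseteq> {x. x ^ (CHAR('K) ^ D) \<in> F}"
        unfolding G_def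
      proof (intro adj_min frob_subring[OF pC FR])
        show "F \<subseteq> {x. x ^ (CHAR('K) ^ D) \<in> F}" using FR subring_power by blast
        fix j assume "j \<in> {1..i'}"
        have "(\<alpha> j ^ q) ^ (CHAR('K) ^ D) = \<alpha> j ^ (p ^ e1)"
          using qN p(2) unfolding N_def by (simp add: power_mult[symmetric])
        then show "\<alpha> j ^ q \<in> {x. x ^ (CHAR('K) ^ D) \<in> F}" using all_e1 by simp
      qed
      then show ?thesis using that p(2) unfolding N_def by auto
    qed
    define w where "w = (y ^ q) ^ N"
    have wF: "w \<in> F" unfolding w_def using all_e1[of y] qN by (simp add: power_mult[symmetric])
    define b0 where "b0 = a1 ^ N"
    define R where "R = map_poly (\<lambda>c. c ^ N) P' - [:w:]"
    have coeffR: "coeff R m = (coeff P' m) ^ N - (if m = 0 then w else 0)" for m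
      unfolding R_def using N0 by (simp add: coeff_map_poly coeff_pCons split: nat.splits)
    have Rin: "polyin F R" unfolding polyin_def coeffR
      using SP(2) GN wF FR by (auto simp: polyin_def intro!: subring_diff subring_0)
    have Rdeg: "degree R < q"
    proof -
      have "degree (map_poly (\<lambda>c. c ^ N) P') \<le> degree P'" by (subst degree_map_poly) simp_all
      then show ?thesis unfolding R_def using P'deg
        by (intro le_less_trans[OF degree_diff_le_max]) auto
    qed
    have Rval: "poly R b0 = 0"
    proof -
      have "poly (map_poly (\<lambda>c. c ^ N) P') b0 = (poly P' a1) ^ N"
        unfolding b0_def N_def using poly_frob[OF pC, of P' a1 D] p(2) by simp
      then show ?thesis unfolding R_def w_def using P'val by simp
    qed
    have coeffs0: "coeff P' m = 0" if "m \<ge> 1" for m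
    proof (cases "n = 0")
      case True
      then have "q = 1" unfolding q_def by simp
      then show ?thesis using P'deg that by (intro coeff_eq_0) simp
    next
      case False
      have e1pos: "e1 \<ge> 1" using False ne1 by simp
      have b1: "b0 ^ (CHAR('K) ^ n) \<in> F"
        unfolding b0_def using all_e1[of a1] qN p(2) unfolding q_def by (simp add: power_mult[symmetric] mult.commute)
      have "b0 ^ (CHAR('K) ^ (n - 1)) = \<alpha> 1 ^ (p ^ (e1 - 1))"
      proof -
        have "N * p ^ (n - 1) = p ^ (e1 - 1)" unfolding N_def D_def using ne1 False
          by (simp add: power_add[symmetric])
        then show ?thesis unfolding b0_def a1_def using p(2) by (simp add: power_mult[symmetric])
      qed
      moreover have "\<alpha> 1 ^ (p ^ (e1 - 1)) \<notin> F" unfolding e1_def using e1pos e1_def by (intro expo_min) simp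
      ultimately have b2: "b0 ^ (CHAR('K) ^ (n - 1)) \<notin> F" by simp
      have "R = 0" using factA[OF pC Suc.prems(2) b1 b2 Rin] Rdeg Rval p(2) unfolding q_def by simp
      then have "(coeff P' m) ^ N = 0" using coeffR[of m] that by simp
      then show ?thesis by simp
    qed
    have "degree P' = 0"
    proof (rule ccontr)
      assume "degree P' \<noteq> 0"
      then have "lead_coeff P' = 0" using coeffs0 by simp
      then have "P' = 0" by simp
      then show False using \<open>degree P' \<noteq> 0\<close> by simp
    qed
    then have "P' = [:coeff P' 0:]" by (metis degree_eq_zeroE coeff_pCons_0)
    then have "poly P' a1 = coeff P' 0" by (metis poly_pCons poly_0 mult_zero_right add.right_neutral)
    then have "y ^ q = coeff P' 0" using P'val by simp
    moreover have "coeff P' 0 \<in> G" using SP(2) by (simp add: polyin_def)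
    ultimately show ?thesis unfolding G_def q_def n_def by simp
  qed
qed



section \<open>Formal tensor sums\<close>

lemma tsum_Nil [simp]: "tsum \<phi> [] = 0" by (simp add: tsum_def)
lemma tsum_Cons [simp]: "tsum \<phi> ((a, b) # t) = \<phi> a b + tsum \<phi> t" by (simp add: tsum_def)
lemma tsum_append [simp]: "tsum \<phi> (s @ t) = tsum \<phi> s + tsum \<phi> t" by (simp add: tsum_def)
lemma tsum_add: "tsum (\<lambda>a b. f a b + g a b) t = tsum f t + tsum g t"
  by (induction t) (auto simp: algebra_simps)
lemma tsum_cmult: "tsum (\<lambda>a b. c * f a b) t = c * tsum f t"
  by (induction t) (auto simp: algebra_simps)
lemma tsum_multc: "tsum (\<lambda>a b. f a b * c) t = tsum f t * c"
  by (induction t) (auto simp: algebra_simps)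
lemma tsum_cong: "(\<And>a b. f a b = g a b) \<Longrightarrow> tsum f t = tsum g t"
  by (induction t) auto

definition sh :: "('K::field \<Rightarrow> 'K \<Rightarrow> 'K) \<Rightarrow> 'K \<Rightarrow> 'K \<Rightarrow> 'K \<Rightarrow> 'K \<Rightarrow> 'K" where
  "sh \<phi> a b = (\<lambda>c d. \<phi> (a * c) (b * d))"

lemma tmul_Nil [simp]: "tmul [] t = []" by (simp add: tmul_def)
lemma tmul_Cons [simp]: "tmul ((a, b) # s) t = map (\<lambda>(c, d). (a * c, b * d)) t @ tmul s t"
  by (simp add: tmul_def)
lemma tsum_map_sh: "tsum \<phi> (map (\<lambda>(c, d). (a * c, b * d)) t) = tsum (sh \<phi> a b) t"
  by (induction t) (auto simp: sh_def)

lemma tsum_tmul: "tsum \<phi> (tmul s t) = tsum (\<lambda>a b. tsum (sh \<phi> a b) t) s"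
  by (induction s) (auto simp: tsum_map_sh)

lemma tsum_swap: "tsum (\<lambda>a b. tsum (g a b) t) s = tsum (\<lambda>c d. tsum (\<lambda>a b. g a b c d) s) t"
proof (induction s)
  case Nil then show ?case by (induction t) auto
next
  case (Cons x s)
  obtain a b where x: "x = (a, b)" by (cases x)
  show ?case using Cons by (simp add: x tsum_add)
qed

lemma sh_sh: "sh (sh \<phi> a b) c d = sh \<phi> (a * c) (b * d)"
  by (simp add: sh_def fun_eq_iff mult.assoc)

lemma sh_1: "sh \<phi> 1 1 = \<phi>" by (simp add: sh_def)

lemma pascal_sum:
  fixes X :: "nat \<Rightarrow> nat \<Rightarrow> 'a::comm_semiring_1"
  shows "(\<Sum>j\<le>Suc n. of_nat (Suc n choose j) * X j (Suc n - j))
       = (\<Sum>j\<le>n. of_nat (n choose j) * X (Suc j) (n - j)) + (\<Sum>j\<le>n. of_nat (n choose j) * X j (Suc n - j))"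
proof -
  have "(\<Sum>j\<le>Suc n. of_nat (Suc n choose j) * X j (Suc n - j))
      = (\<Sum>j\<le>Suc n. of_nat (n choose j) * X j (Suc n - j) + (if j = 0 then 0 else of_nat (n choose (j - 1)) * X j (Suc n - j)))"
  proof (rule sum.cong[OF refl])
    fix j assume "j \<in> {..Suc n}"
    show "of_nat (Suc n choose j) * X j (Suc n - j) = of_nat (n choose j) * X j (Suc n - j) + (if j = 0 then 0 else of_nat (n choose (j - 1)) * X j (Suc n - j))"
      by (cases j) (auto simp: algebra_simps)
  qed
  also have "\<dots> = (\<Sum>j\<le>Suc n. of_nat (n choose j) * X j (Suc n - j)) + (\<Sum>j\<le>Suc n. (if j = 0 then 0 else of_nat (n choose (j - 1)) * X j (Suc n - j)))"
    by (rule sum.distrib)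
  also have "(\<Sum>j\<le>Suc n. of_nat (n choose j) * X j (Suc n - j)) = (\<Sum>j\<le>n. of_nat (n choose j) * X j (Suc n - j))"
    by (simp add: binomial_eq_0)
  also have "(\<Sum>j\<le>Suc n. (if j = 0 then 0 else of_nat (n choose (j - 1)) * X j (Suc n - j))) = (\<Sum>j\<le>n. of_nat (n choose j) * X (Suc j) (n - j))"
    by (subst sum.atMost_Suc_shift) simp
  finally show ?thesis by (simp add: add.commute)
qed

lemma tpow_binom:
  "tsum \<phi> (tpow ((a, b) # v) n) = (\<Sum>j\<le>n. of_nat (n choose j) * tsum (sh \<phi> (a ^ j) (b ^ j)) (tpow v (n - j)))"
proof (induction n arbitrary: \<phi>)
  case 0 then show ?case by (simp add: sh_def)
next
  case (Suc n)
  define T where "T = tpow ((a, b) # v) n"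
  define X where "X = (\<lambda>j m. tsum (sh \<phi> (a ^ j) (b ^ j)) (tpow v m))"
  have "tsum \<phi> (tpow ((a, b) # v) (Suc n)) = tsum (sh \<phi> a b) T + tsum (\<lambda>a' b'. tsum (sh \<phi> a' b') T) v"
    by (simp add: T_def tsum_tmul tsum_map_sh)
  also have "tsum (sh \<phi> a b) T = (\<Sum>j\<le>n. of_nat (n choose j) * X (Suc j) (n - j))"
    unfolding T_def Suc.IH X_def by (simp add: sh_sh)
  also have "tsum (\<lambda>a' b'. tsum (sh \<phi> a' b') T) v = (\<Sum>j\<le>n. of_nat (n choose j) * X j (Suc n - j))"
  proof -
    define \<psi> where "\<psi> = (\<lambda>c d. tsum (\<lambda>a' b'. \<phi> (a' * c) (b' * d)) v)"
    have "tsum (\<lambda>a' b'. tsum (sh \<phi> a' b') T) v = tsum \<psi> T"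
      unfolding \<psi>_def sh_def by (rule tsum_swap)
    also have "\<dots> = (\<Sum>j\<le>n. of_nat (n choose j) * tsum (sh \<psi> (a ^ j) (b ^ j)) (tpow v (n - j)))"
      unfolding T_def by (rule Suc.IH)
    also have "\<dots> = (\<Sum>j\<le>n. of_nat (n choose j) * X j (Suc n - j))"
    proof (rule sum.cong[OF refl])
      fix j assume j: "j \<in> {..n}"
      have "tsum (sh \<psi> (a ^ j) (b ^ j)) W = tsum (sh \<phi> (a ^ j) (b ^ j)) (tmul v W)" for W
      proof -
        have "tsum (sh \<psi> (a ^ j) (b ^ j)) W = tsum (\<lambda>c d. tsum (\<lambda>a' b'. \<phi> (a' * (a ^ j * c)) (b' * (b ^ j * d))) v) W"
          by (simp add: sh_def \<psi>_def)
        also have "\<dots> = tsum (\<lambda>a' b'. tsum (\<lambda>c d. \<phi> (a' * (a ^ j * c)) (b' * (b ^ j * d))) W) v"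
          by (rule tsum_swap[symmetric])
        also have "\<dots> = tsum (sh \<phi> (a ^ j) (b ^ j)) (tmul v W)"
          unfolding tsum_tmul sh_def by (simp add: mult.left_commute)
        finally show ?thesis .
      qed
      moreover have "tmul v (tpow v (n - j)) = tpow v (Suc n - j)" using j by (simp add: Suc_diff_le)
      ultimately show "of_nat (n choose j) * tsum (sh \<psi> (a ^ j) (b ^ j)) (tpow v (n - j)) = of_nat (n choose j) * X j (Suc n - j)"
        unfolding X_def by simp
    qed
    finally show ?thesis .
  qed
  also have "(\<Sum>j\<le>n. of_nat (n choose j) * X (Suc j) (n - j)) + (\<Sum>j\<le>n. of_nat (n choose j) * X j (Suc n - j))
      = (\<Sum>j\<le>Suc n. of_nat (Suc n choose j) * X j (Suc n - j))"
    by (rule pascal_sum[symmetric])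
  finally show ?case unfolding X_def .
qed

lemma choose_char_zero:
  assumes p: "prime CHAR('K::field)" and q: "q = CHAR('K) ^ n" and j: "0 < j" "j < q"
  shows "of_nat (q choose j) = (0::'K)"
proof -
  have pp: "prime CHAR('K poly)" using p by simp
  have "([:1, 1:] :: 'K poly) = [:1:] + monom 1 1" by (simp add: monom_altdef)
  then have "([:1, 1:] :: 'K poly) ^ q = [:1:] ^ q + (monom 1 1) ^ q"
    using freshmans_dream'[OF pp, of q n "[:1:]" "monom 1 1"] q by simp
  also have "\<dots> = [:1:] + monom 1 q" by (simp add: monom_power poly_const_pow)
  finally have eq: "([:1, 1:] :: 'K poly) ^ q = [:1:] + monom 1 q" .
  have "coeff (([:1, 1:] :: 'K poly) ^ q) j = of_nat (q choose j)"
    using coeff_linear_poly_power[of j q "1::'K" 1] j by simp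
  moreover have "coeff ([:1:] + monom (1::'K) q) j = 0" using j by (simp add: coeff_pCons coeff_monom split: nat.splits)
  ultimately show ?thesis using eq by simp
qed

definition tfrob :: "nat \<Rightarrow> ('K::field \<times> 'K) list \<Rightarrow> ('K \<times> 'K) list" where
  "tfrob q t = map (\<lambda>(a, b). (a ^ q, b ^ q)) t"

lemma tpow_frob:
  assumes p: "prime CHAR('K::field)" and q: "q = CHAR('K) ^ n"
  shows "tsum \<phi> (tpow (t :: ('K \<times> 'K) list) q) = tsum \<phi> (tfrob q t)"
proof (induction t arbitrary: \<phi>)
  have q0: "q > 0" using q p prime_gt_0_nat by simp
  case Nil
  then show ?case using q0 by (cases q) (auto simp: tfrob_def)
next
  have q0: "q > 0" using q p prime_gt_0_nat by simp
  case (Cons x v)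
  obtain a b where x: "x = (a, b)" by (cases x)
  define g where "g = (\<lambda>j. of_nat (q choose j) * tsum (sh \<phi> (a ^ j) (b ^ j)) (tpow v (q - j)))"
  have "tsum \<phi> (tpow ((a, b) # v) q) = (\<Sum>j\<le>q. g j)" unfolding g_def by (rule tpow_binom)
  also have "\<dots> = (\<Sum>j\<in>{0, q}. g j)"
  proof (rule sum.mono_neutral_right)
    show "\<forall>j\<in>{..q} - {0, q}. g j = 0"
      using choose_char_zero[OF p q] unfolding g_def by auto
  qed auto
  also have "\<dots> = g 0 + g q" using q0 by simp
  also have "\<dots> = tsum \<phi> (tpow v q) + \<phi> (a ^ q) (b ^ q)" unfolding g_def by (simp add: sh_1 sh_def)
  finally show ?case using Cons.IH x by (simp add: tfrob_def)
qed



lemma kb_add1: "k_bilinear k \<phi> \<Longrightarrow> \<phi> (a + a') b = \<phi> a b + \<phi> a' b" by (simp add: k_bilinear_def)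
lemma kb_add2: "k_bilinear k \<phi> \<Longrightarrow> \<phi> a (b + b') = \<phi> a b + \<phi> a b'" by (simp add: k_bilinear_def)
lemma kb_smult1: "k_bilinear k \<phi> \<Longrightarrow> c \<in> k \<Longrightarrow> \<phi> (c * a) b = c * \<phi> a b" by (simp add: k_bilinear_def)
lemma kb_smult2: "k_bilinear k \<phi> \<Longrightarrow> c \<in> k \<Longrightarrow> \<phi> a (c * b) = c * \<phi> a b" by (simp add: k_bilinear_def)
lemma kb_zero1: "k_bilinear k \<phi> \<Longrightarrow> \<phi> 0 b = 0"
  using kb_add1[of k \<phi> 0 0 b] by (metis add_cancel_right_right add.right_neutral)
lemma kb_zero2: "k_bilinear k \<phi> \<Longrightarrow> \<phi> a 0 = 0"
  using kb_add2[of k \<phi> a 0 0] by (metis add_cancel_right_right add.right_neutral)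
lemma kb_neg1: "k_bilinear k \<phi> \<Longrightarrow> \<phi> (- a) b = - \<phi> a b"
  using kb_add1[of k \<phi> a "- a" b] kb_zero1[of k \<phi> b] by (metis add.commute eq_neg_iff_add_eq_0 add.right_inverse)
lemma kb_diff2: "k_bilinear k \<phi> \<Longrightarrow> \<phi> a (b - b') = \<phi> a b - \<phi> a b'"
  using kb_add2[of k \<phi> a "b - b'" b'] by simp

lemma kb_shL: "k_bilinear k \<phi> \<Longrightarrow> k_bilinear k (\<lambda>a b. tsum (sh \<phi> a b) t)"
  unfolding k_bilinear_def sh_def
  by (auto simp: distrib_right tsum_add mult.assoc tsum_cmult)

lemma kb_shR: "k_bilinear k \<phi> \<Longrightarrow> k_bilinear k (\<lambda>c d. tsum (\<lambda>a b. \<phi> (a * c) (b * d)) s)"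
  unfolding k_bilinear_def
  by (auto simp: distrib_left tsum_add mult.left_commute tsum_cmult)

lemma teq_refl: "teq k s s" by (simp add: teq_def)
lemma teq_sym: "teq k s t \<Longrightarrow> teq k t s" by (simp add: teq_def)
lemma teq_trans: "teq k s t \<Longrightarrow> teq k t u \<Longrightarrow> teq k s u" by (simp add: teq_def)
lemma teq_tadd: "teq k s s' \<Longrightarrow> teq k t t' \<Longrightarrow> teq k (tadd s t) (tadd s' t')"
  by (simp add: teq_def tadd_def)
lemma teq_tmul:
  assumes "teq k s s'" "teq k t t'"
  shows "teq k (tmul s t) (tmul s' t')"
  unfolding teq_def
proof (intro allI impI)
  fix \<phi> :: "'a \<Rightarrow> 'a \<Rightarrow> 'a" assume \<phi>: "k_bilinear k \<phi>"
  have "tsum \<phi> (tmul s t) = tsum (\<lambda>a b. tsum (sh \<phi> a b) t) s" by (rule tsum_tmul)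
  also have "\<dots> = tsum (\<lambda>a b. tsum (sh \<phi> a b) t) s'" using assms(1) kb_shL[OF \<phi>] by (simp add: teq_def)
  also have "\<dots> = tsum (\<lambda>c d. tsum (\<lambda>a b. \<phi> (a * c) (b * d)) s') t" unfolding sh_def by (rule tsum_swap)
  also have "\<dots> = tsum (\<lambda>c d. tsum (\<lambda>a b. \<phi> (a * c) (b * d)) s') t'" using assms(2) kb_shR[OF \<phi>] by (simp add: teq_def)
  also have "\<dots> = tsum (\<lambda>a b. tsum (sh \<phi> a b) t') s'" unfolding sh_def by (rule tsum_swap[symmetric])
  also have "\<dots> = tsum \<phi> (tmul s' t')" by (rule tsum_tmul[symmetric])
  finally show "tsum \<phi> (tmul s t) = tsum \<phi> (tmul s' t')" .
qed

lemma tmult_tmul: "tmult (tmul s t) = tmult s * tmult t"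
proof -
  have i: "tsum (sh (*) a b) t = (a * b) * tsum (*) t" for a b :: 'a
  proof -
    have "tsum (sh (*) a b) t = tsum (\<lambda>c d. (a * b) * (c * d)) t" by (rule tsum_cong) (simp add: sh_def mult_ac)
    then show ?thesis by (simp add: tsum_cmult)
  qed
  show ?thesis unfolding tmult_def tsum_tmul i by (rule tsum_multc)
qed

lemma tmult_tpow: "tmult (tpow t n) = tmult t ^ n"
  by (induction n) (simp_all add: tmult_tmul, simp add: tmult_def)

definition Wset :: "'K::field set \<Rightarrow> ('K \<times> 'K) list set \<Rightarrow> 'K set" where
  "Wset k Gens = {b. \<exists>s\<in>talg Gens. teq k [(1, b)] s}"

lemma Wset_subring:
  shows "is_subring (Wset k Gens)" "k \<subseteq> Wset k Gens"
proof -
  have base: "c \<in> Wset k Gens" if "c \<in> k" for c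
  proof -
    have "teq k [(1, c)] (tconst c)"
      unfolding teq_def tconst_def
    proof (intro allI impI)
      fix \<phi> :: "'a \<Rightarrow> 'a \<Rightarrow> 'a" assume \<phi>: "k_bilinear k \<phi>"
      have "\<phi> 1 (c * 1) = c * \<phi> 1 1" by (rule kb_smult2[OF \<phi> that])
      moreover have "\<phi> (c * 1) 1 = c * \<phi> 1 1" by (rule kb_smult1[OF \<phi> that])
      ultimately show "tsum \<phi> [(1, c)] = tsum \<phi> [(c, 1)]" by simp
    qed
    then show ?thesis unfolding Wset_def using talg.coeff by blast
  qed
  then show "k \<subseteq> Wset k Gens" by blast
  show "is_subring (Wset k Gens)"
    unfolding is_subring_def
  proof (intro conjI ballI)
    have z: "teq k [(1, 0)] (tconst 0)" unfolding teq_def tconst_def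
      by (auto simp: kb_zero1 kb_zero2)
    then show "0 \<in> Wset k Gens" unfolding Wset_def using talg.coeff by blast
    have "teq k [(1, 1)] (tconst 1)" unfolding teq_def tconst_def by simp
    then show "1 \<in> Wset k Gens" unfolding Wset_def using talg.coeff by blast
    fix x y assume "x \<in> Wset k Gens" "y \<in> Wset k Gens"
    then obtain s t where st: "s \<in> talg Gens" "teq k [(1, x)] s" "t \<in> talg Gens" "teq k [(1, y)] t"
      unfolding Wset_def by blast
    have "teq k [(1, x + y)] (tadd [(1, x)] [(1, y)])"
      unfolding teq_def tadd_def by (auto simp: kb_add2)
    then have "teq k [(1, x + y)] (tadd s t)" using teq_tadd[OF st(2) st(4)] teq_trans by blast
    then show "x + y \<in> Wset k Gens" unfolding Wset_def using talg.add[OF st(1) st(3)] by blast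
    have "teq k [(1, x - y)] (tadd [(1, x)] (tmul (tconst (- 1)) [(1, y)]))"
      unfolding teq_def tadd_def tconst_def by (auto simp: kb_diff2 kb_neg1)
    moreover have "teq k (tadd [(1, x)] (tmul (tconst (- 1)) [(1, y)])) (tadd s (tmul (tconst (- 1)) t))"
      by (intro teq_tadd teq_tmul st teq_refl)
    ultimately have "teq k [(1, x - y)] (tadd s (tmul (tconst (- 1)) t))" by (rule teq_trans)
    then show "x - y \<in> Wset k Gens" unfolding Wset_def
      using talg.add[OF st(1) talg.mul[OF talg.coeff st(3)]] by blast
    have "[(1, x * y)] = tmul [(1, x)] [(1, y)]" by simp
    then have "teq k [(1, x * y)] (tmul s t)" using teq_tmul[OF st(2) st(4)] by simp
    then show "x * y \<in> Wset k Gens" unfolding Wset_def using talg.mul[OF st(1) st(3)] by blast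
  qed
qed

lemma span_lemma:
  assumes "\<forall>b\<in>snd ` set t. b \<in> Wset k Gens"
  shows "\<exists>s\<in>talg Gens. teq k t s"
  using assms
proof (induction t)
  case Nil
  have "teq k [] (tconst 0)" unfolding teq_def tconst_def by (auto simp: kb_zero1)
  then show ?case using talg.coeff by blast
next
  case (Cons x t)
  obtain a b where x: "x = (a, b)" by (cases x)
  from Cons obtain s' where s': "s' \<in> talg Gens" "teq k t s'" by auto
  from Cons.prems x obtain s where s: "s \<in> talg Gens" "teq k [(1, b)] s" unfolding Wset_def by auto
  have "(a, b) # t = tadd (tmul (tconst a) [(1, b)]) t" by (simp add: tadd_def tconst_def)
  moreover have "teq k (tadd (tmul (tconst a) [(1, b)]) t) (tadd (tmul (tconst a) s) s')"
    by (intro teq_tadd teq_tmul teq_refl s s')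
  ultimately show ?case using x talg.add[OF talg.mul[OF talg.coeff s(1)] s'(1)] by auto
qed



lemma tgen_W:
  assumes p: "prime CHAR('K::field)" and q: "q = CHAR('K) ^ n"
    and g: "tpow (tgen (a::'K)) q \<in> Gens"
  shows "a ^ q \<in> Wset k Gens"
proof -
  have q0: "q > 0" using q p prime_gt_0_nat by simp
  have "teq k [(1, a ^ q)] (tadd (tpow (tgen a) q) (tconst (a ^ q)))"
    unfolding teq_def
  proof (intro allI impI)
    fix \<phi> :: "'K \<Rightarrow> 'K \<Rightarrow> 'K" assume \<phi>: "k_bilinear k \<phi>"
    have "tsum \<phi> (tpow (tgen a) q) = tsum \<phi> (tfrob q (tgen a))" by (rule tpow_frob[OF p q])
    also have "\<dots> = \<phi> 1 (a ^ q) + \<phi> (- (a ^ q)) 1"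
      using frob_neg[OF p, of a n] q by (simp add: tfrob_def tgen_def)
    finally show "tsum \<phi> [(1, a ^ q)] = tsum \<phi> (tadd (tpow (tgen a) q) (tconst (a ^ q)))"
      by (simp add: tadd_def tconst_def kb_neg1[OF \<phi>])
  qed
  then show ?thesis unfolding Wset_def using talg.add[OF talg.gen[OF g] talg.coeff] by blast
qed

theorem lemma2p7:
  fixes k :: "'K::field set" and p l :: nat and \<alpha> :: "nat \<Rightarrow> 'K"
  assumes "prime p" and "of_nat p = (0::'K)"
    and "is_subfield k"
    and "fin_dim_over k"
    and "\<forall>x::'K. \<exists>s. x ^ (p ^ s) \<in> k"
    and "normal_gen_seq p k \<alpha> l"
  shows "(\<forall>t. tmult t = 0 \<longrightarrow>
            (\<exists>s\<in>talg (tgen ` \<alpha> ` {1..l}). teq k t s))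
       \<and> (\<forall>i\<in>{1..l}. \<forall>t. tmult t = 0 \<longrightarrow>
            (\<exists>s\<in>talg ((\<lambda>j. tpow (tgen (\<alpha> j)) (p ^ expo p (adj k \<alpha> (i - 1)) (\<alpha> i))) ` {1..<i}).
                teq k (tpow t (p ^ expo p (adj k \<alpha> (i - 1)) (\<alpha> i))) s)
            \<and> tmult (tpow t (p ^ expo p (adj k \<alpha> (i - 1)) (\<alpha> i))) = 0)"
proof -
  have pc: "CHAR('K) = p" using char_eq assms(1,2) by blast
  have pC: "prime CHAR('K)" using pc assms(1) by simp
  have kf: "is_subfield k" by fact
  have norm: "\<forall>i\<in>{1..l}. is_normal_elt p (adj k \<alpha> (i - 1)) (\<alpha> i)" and top: "adj k \<alpha> l = UNIV"
    using assms(6) unfolding normal_gen_seq_def by auto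
  have part1: "\<exists>s\<in>talg (tgen ` \<alpha> ` {1..l}). teq k t s" for t
  proof (rule span_lemma, intro ballI)
    fix b
    have "adj k \<alpha> l \<subseteq> Wset k (tgen ` \<alpha> ` {1..l})"
    proof (intro adj_min Wset_subring)
      fix j assume j: "j \<in> {1..l}"
      have "teq k [(1, \<alpha> j)] (tadd (tgen (\<alpha> j)) (tconst (\<alpha> j)))"
        unfolding teq_def by (auto simp: tadd_def tgen_def tconst_def kb_neg1)
      moreover have "tadd (tgen (\<alpha> j)) (tconst (\<alpha> j)) \<in> talg (tgen ` \<alpha> ` {1..l})"
        using j by (intro talg.add talg.gen talg.coeff) auto
      ultimately show "\<alpha> j \<in> Wset k (tgen ` \<alpha> ` {1..l})" unfolding Wset_def by blast
    qed
    then show "b \<in> Wset k (tgen ` \<alpha> ` {1..l})" using top by auto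
  qed
  have part2: "(\<exists>s\<in>talg ((\<lambda>j. tpow (tgen (\<alpha> j)) (p ^ expo p (adj k \<alpha> (i - 1)) (\<alpha> i))) ` {1..<i}).
                teq k (tpow t (p ^ expo p (adj k \<alpha> (i - 1)) (\<alpha> i))) s)
            \<and> tmult (tpow t (p ^ expo p (adj k \<alpha> (i - 1)) (\<alpha> i))) = 0"
    if i: "i \<in> {1..l}" and t: "tmult t = 0" for i t
  proof -
    define n where "n = expo p (adj k \<alpha> (i - 1)) (\<alpha> i)"
    define q where "q = p ^ n"
    define Gens where "Gens = (\<lambda>j. tpow (tgen (\<alpha> j)) q) ` {1..<i}"
    have qC: "q = CHAR('K) ^ n" unfolding q_def using pc by simp
    have q0: "q > 0" unfolding q_def using assms(1) prime_gt_0_nat by simp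
    have normi: "\<forall>j\<in>{1..i}. is_normal_elt p (adj k \<alpha> (j - 1)) (\<alpha> j)" using norm i by auto
    have keyi: "y ^ q \<in> adj k (\<lambda>j. \<alpha> j ^ q) (i - 1)" for y
      using key[OF assms(1) pc, of i k \<alpha> y] i kf assms(5) normi unfolding q_def n_def by auto
    have AW: "adj k (\<lambda>j. \<alpha> j ^ q) (i - 1) \<subseteq> Wset k Gens"
    proof (intro adj_min Wset_subring)
      fix j assume j: "j \<in> {1..i - 1}"
      have "tpow (tgen (\<alpha> j)) q \<in> Gens" unfolding Gens_def using j by auto
      then show "\<alpha> j ^ q \<in> Wset k Gens" by (rule tgen_W[OF pC qC])
    qed
    have "\<exists>s\<in>talg Gens. teq k (tfrob q t) s"
    proof (rule span_lemma, intro ballI)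
      fix b assume "b \<in> snd ` set (tfrob q t)"
      then obtain y where "b = y ^ q" unfolding tfrob_def by auto
      then show "b \<in> Wset k Gens" using keyi AW by auto
    qed
    then obtain s where s: "s \<in> talg Gens" "teq k (tfrob q t) s" by blast
    have "teq k (tpow t q) (tfrob q t)" unfolding teq_def using tpow_frob[OF pC qC] by simp
    then have "teq k (tpow t q) s" using s(2) by (rule teq_trans)
    moreover have "tmult (tpow t q) = 0" using t q0 by (simp add: tmult_tpow)
    ultimately show ?thesis using s(1) unfolding Gens_def q_def n_def by blast
  qed
  show ?thesis using part1 part2 by blast
qed

end
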